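(* Let $d \ge 1$, $m \ge 1$, let $\theta^* \in \mathbb{R}^d \setminus \{0\}$ and $\sigma > 0$, and let $(x_1, y_1), \dots, (x_m, y_m)$ be i.i.d. samples from the $(\theta^*, \sigma)$-Gaussian model. Let $h : \mathbb{R}^d \to \{-1, +1\}$ be any classifier, let $\hat{y}_i = h(x_i)$, and let $\bar{z} = \frac{1}{m} \sum_{i=1}^m \hat{y}_i x_i$. Then $$ \mathbb{P}\left( \|\bar{z}\|_2 \ge (1 + c)\|\theta^*\|_2 + 2\sigma \sqrt{\frac{d}{m}} \right) \le e^{-6\sqrt{d}/5}, $$ where $c = \frac{\sqrt{20}\,\sigma}{\|\theta^*\|_2} \sqrt{\frac{\sqrt{d}}{m} + \log 2}$.
   Context: The $(\theta^*, \sigma)$-Gaussian model is the distribution over $(x, y) \in \mathbb{R}^d \times \{\pm 1\}$ obtained by drawing $y \in \{\pm 1\}$ uniformly at random and then drawing $x \sim \mathcal{N}(y \cdot \theta^*, \sigma^2 I_d)$. *)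

theory Defs
  imports "HOL-Probability.Probability"
begin

definition gauss_vec_density :: "real^'d \<Rightarrow> real \<Rightarrow> real^'d \<Rightarrow> real" where
  "gauss_vec_density mu sg x = (\<Prod>i\<in>UNIV. normal_density (mu $ i) sg (x $ i))"

text \<open>The (theta, sg)-Gaussian model: y uniform on {-1,+1}, x ~ N(y theta, sg^2 I).
  Realised as a density w.r.t. Lebesgue measure times counting measure on {-1,1}.\<close>
definition gauss_model :: "real^'d \<Rightarrow> real \<Rightarrow> ((real^'d) \<times> real) measure" where
  "gauss_model theta sg =
     density (lborel \<Otimes>\<^sub>M count_space {-1, 1})
       (\<lambda>(x, y). ennreal (1/2 * gauss_vec_density (y *\<^sub>R theta) sg x))"

definition gauss_samples :: "nat \<Rightarrow> real^'d \<Rightarrow> real \<Rightarrow> (nat \<Rightarrow> (real^'d) \<times> real) measure" where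
  "gauss_samples m theta sg = PiM {..<m} (\<lambda>_. gauss_model theta sg)"

end

theory Submission
  imports Defs
begin


lemma gauss1_pt:
  fixes sg l v s t :: real
  assumes sg: "sg > 0" and s: "s * s = 1" and a: "2 * l * sg\<^sup>2 < 1"
  defines "a \<equiv> 1 - 2 * l * sg\<^sup>2"
  shows "normal_density 0 sg t * exp (l * (v + s * t)\<^sup>2)
     = 1 / sqrt a * exp (l * v\<^sup>2 / a) * normal_density (2 * l * s * v * sg\<^sup>2 / a) (sg / sqrt a) t"
proof -
  have apos: "a > 0" using a a_def by simp
  define mu where "mu = 2 * l * s * v * sg\<^sup>2 / a"
  have amu: "a * (t - mu) = a * t - 2 * l * s * v * sg\<^sup>2" unfolding mu_def using apos
    by (simp add: right_diff_distrib)
  have poly: "- a * t\<^sup>2 + 2 * sg\<^sup>2 * a * l * (v + s * t)\<^sup>2 = 2 * sg\<^sup>2 * l * v\<^sup>2 - (a * t - 2 * l * s * v * sg\<^sup>2)\<^sup>2"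
    unfolding a_def using s by algebra
  have ss: "(sg / sqrt a)\<^sup>2 = sg\<^sup>2 / a" using apos by (simp add: power_divide)
  have e1: "2 * sg\<^sup>2 * a * (-(t - 0)\<^sup>2 / (2 * sg\<^sup>2) + l * (v + s * t)\<^sup>2) = - a * t\<^sup>2 + 2 * sg\<^sup>2 * a * l * (v + s * t)\<^sup>2"
    using sg by (simp add: algebra_simps)
  have e2: "2 * sg\<^sup>2 * a * (l * v\<^sup>2 / a + (-(t - mu)\<^sup>2 / (2 * (sg / sqrt a)\<^sup>2))) = 2 * sg\<^sup>2 * l * v\<^sup>2 - (a * (t - mu))\<^sup>2"
  proof -
    have q: "-(t - mu)\<^sup>2 / (2 * (sg\<^sup>2 / a)) = -a * (t - mu)\<^sup>2 / (2 * sg\<^sup>2)"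
      using sg apos by (simp add: field_simps power2_eq_square)
    show ?thesis unfolding ss q using sg apos by (simp add: right_diff_distrib power2_eq_square field_simps)
  qed
  have e: "-(t - 0)\<^sup>2 / (2 * sg\<^sup>2) + l * (v + s * t)\<^sup>2 = l * v\<^sup>2 / a + (-(t - mu)\<^sup>2 / (2 * (sg / sqrt a)\<^sup>2))"
  proof -
    have "2 * sg\<^sup>2 * a * (-(t - 0)\<^sup>2 / (2 * sg\<^sup>2) + l * (v + s * t)\<^sup>2)
        = 2 * sg\<^sup>2 * a * (l * v\<^sup>2 / a + (-(t - mu)\<^sup>2 / (2 * (sg / sqrt a)\<^sup>2)))"
      unfolding e1 e2 amu poly ..
    then show ?thesis using apos sg by simp
  qed
  have c: "1 / sqrt (2 * pi * sg\<^sup>2) = 1 / sqrt a * (1 / sqrt (2 * pi * (sg / sqrt a)\<^sup>2))"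
    using apos sg unfolding ss by (simp add: real_sqrt_divide real_sqrt_mult)
  have E: "exp (-(t - 0)\<^sup>2 / (2 * sg\<^sup>2)) * exp (l * (v + s * t)\<^sup>2) = exp (l * v\<^sup>2 / a) * exp (-(t - mu)\<^sup>2 / (2 * (sg / sqrt a)\<^sup>2))"
    unfolding exp_add[symmetric] e ..
  have "normal_density 0 sg t * exp (l * (v + s * t)\<^sup>2) = 1 / sqrt a * (1 / sqrt (2 * pi * (sg / sqrt a)\<^sup>2)) * (exp (-(t - 0)\<^sup>2 / (2 * sg\<^sup>2)) * exp (l * (v + s * t)\<^sup>2))"
    unfolding normal_density_def c by (simp only: mult_ac)
  also have "\<dots> = 1 / sqrt a * exp (l * v\<^sup>2 / a) * normal_density mu (sg / sqrt a) t"
    unfolding E normal_density_def by (simp only: mult_ac)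
  finally show ?thesis unfolding mu_def .

qed

lemma nd_integral_1: "sg > 0 \<Longrightarrow> (\<integral>\<^sup>+t. ennreal (normal_density mu sg t) \<partial>lborel) = 1"
  by (subst nn_integral_eq_integral) auto

lemma gauss1:
  fixes sg l v s :: real
  assumes sg: "sg > 0" and s: "s * s = 1" and a: "2 * l * sg\<^sup>2 < 1"
  shows "(\<integral>\<^sup>+t. ennreal (normal_density 0 sg t * exp (l * (v + s * t)\<^sup>2)) \<partial>lborel)
     = ennreal (1 / sqrt (1 - 2 * l * sg\<^sup>2) * exp (l * v\<^sup>2 / (1 - 2 * l * sg\<^sup>2)))"
proof -
  have apos: "1 - 2 * l * sg\<^sup>2 > 0" using a by simp
  show ?thesis
    apply (subst gauss1_pt[OF sg s a])
    apply (subst ennreal_mult)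
      apply (use apos in simp)
     apply simp
    apply (subst nn_integral_cmult)
     apply simp
    apply (use apos sg in \<open>simp add: nd_integral_1\<close>)
    done
qed

lemma Basis_vec_real: "(Basis :: (real^'d::finite) set) = (\<lambda>i. axis i 1) ` UNIV"
  by (auto simp: Basis_vec_def)

lemma inj_axis1: "inj (\<lambda>i::'d::finite. axis i (1::real))"
  by (auto simp: inj_on_def axis_eq_axis)

lemma lborel_vec_prod:
  fixes F :: "'d::finite \<Rightarrow> real \<Rightarrow> ennreal"
  assumes [measurable]: "\<And>i. F i \<in> borel_measurable borel"
  shows "(\<integral>\<^sup>+z. (\<Prod>i\<in>UNIV. F i (z $ i)) \<partial>(lborel::(real^'d) measure)) = (\<Prod>i\<in>UNIV. \<integral>\<^sup>+t. F i t \<partial>lborel)"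
proof -
  have eq: "(\<Prod>i\<in>UNIV. F i (z $ i)) = (\<Prod>b\<in>Basis. F (axis_index b) (z \<bullet> b))" for z :: "real^'d"
    unfolding Basis_vec_real by (subst prod.reindex[OF inj_axis1]) (simp add: inner_axis)
  have eq2: "(\<Prod>i\<in>UNIV. \<integral>\<^sup>+t. F i t \<partial>lborel) = (\<Prod>b\<in>(Basis :: (real^'d) set). \<integral>\<^sup>+t. F (axis_index b) t \<partial>lborel)"
    unfolding Basis_vec_real by (subst prod.reindex[OF inj_axis1]) simp
  show ?thesis unfolding eq eq2
    by (rule nn_integral_lborel_prod) auto
qed

lemma norm2_vec: "(norm (x::real^'d))\<^sup>2 = (\<Sum>i\<in>UNIV. (x $ i)\<^sup>2)"
  by (simp add: norm_vec_def L2_set_def sum_nonneg)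

lemma gaussd:
  fixes sg l s :: real and w :: "real^'d"
  assumes sg: "sg > 0" and s: "s * s = 1" and a: "2 * l * sg\<^sup>2 < 1"
  shows "(\<integral>\<^sup>+z. ennreal (gauss_vec_density 0 sg z * exp (l * (norm (w + s *\<^sub>R z))\<^sup>2)) \<partial>lborel)
     = ennreal ((1 / sqrt (1 - 2 * l * sg\<^sup>2)) ^ CARD('d) * exp (l * (norm w)\<^sup>2 / (1 - 2 * l * sg\<^sup>2)))"
proof -
  have apos: "1 - 2 * l * sg\<^sup>2 > 0" using a by simp
  have pt: "ennreal (gauss_vec_density 0 sg z * exp (l * (norm (w + s *\<^sub>R z))\<^sup>2))
     = (\<Prod>i\<in>UNIV. ennreal (normal_density 0 sg (z $ i) * exp (l * (w $ i + s * z $ i)\<^sup>2)))" for z :: "real^'d"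
    unfolding gauss_vec_density_def norm2_vec sum_distrib_left exp_sum[OF finite]
    by (simp add: prod_ennreal prod.distrib)
  show ?thesis
    unfolding pt
    apply (subst lborel_vec_prod)
     apply measurable
    apply (simp add: gauss1[OF sg s a] prod_ennreal prod.distrib norm2_vec sum_divide_distrib sum_distrib_left exp_sum)
    apply (subst prod_ennreal)
     apply (use apos in simp)
    apply (simp add: prod_dividef power_one_over)
    done
qed


lemma nn_integral_lborel_translate:
  fixes c :: "'a::euclidean_space"
  assumes [measurable]: "F \<in> borel_measurable borel"
  shows "(\<integral>\<^sup>+x. F x \<partial>lborel) = (\<integral>\<^sup>+z. F (c + z) \<partial>lborel)"
proof -
  have "(\<integral>\<^sup>+x. F x \<partial>lborel) = (\<integral>\<^sup>+x. F x \<partial>(distr lborel borel ((+) c)))"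
    by (simp add: lborel_distr_plus)
  also have "\<dots> = (\<integral>\<^sup>+z. F (c + z) \<partial>lborel)"
    by (subst nn_integral_distr) auto
  finally show ?thesis .
qed

lemma vec_nth_measurable[measurable]:
  "f \<in> borel_measurable M \<Longrightarrow> (\<lambda>x. (f x :: real^'n::finite) $ i) \<in> borel_measurable M"
  by (rule borel_measurable_continuous_on[where f="\<lambda>v. v $ i"])
     (auto intro: continuous_on_component[OF continuous_on_id])

lemma snd_count_measurable[measurable]:
  "(\<lambda>p. snd p :: real) \<in> borel_measurable (M \<Otimes>\<^sub>M count_space A)"
  by (rule measurable_compose[OF measurable_snd]) simp

lemma gvd_nonneg: "gauss_vec_density c sg z \<ge> 0"
  unfolding gauss_vec_density_def by (simp add: prod_nonneg)

lemma gvd_measurable[measurable]: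
  "(\<lambda>(x, y). gauss_vec_density (y *\<^sub>R theta) sg (x :: real^'d::finite)) \<in> borel_measurable (lborel \<Otimes>\<^sub>M count_space {-1, 1::real})"
  unfolding gauss_vec_density_def normal_density_def by measurable

lemma gvd_measurable2[measurable]:
  "f \<in> borel_measurable M \<Longrightarrow> (\<lambda>x. gauss_vec_density c sg (f x :: real^'d::finite)) \<in> borel_measurable M"
  unfolding gauss_vec_density_def normal_density_def by measurable simp_all

lemma gvd_shift: "gauss_vec_density c sg (c + z) = gauss_vec_density 0 sg z"
  unfolding gauss_vec_density_def normal_density_def by simp

lemma one_sample:
  fixes sg l s :: real and w theta :: "real^'d"
  assumes sg: "sg > 0" and s: "s * s = 1" and a: "2 * l * sg\<^sup>2 < 1"
  shows "(\<integral>\<^sup>+p. ennreal (exp (l * (norm (w + s *\<^sub>R (fst p - snd p *\<^sub>R theta)))\<^sup>2)) \<partial>gauss_model theta sg)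
     = ennreal ((1 / sqrt (1 - 2 * l * sg\<^sup>2)) ^ CARD('d) * exp (l * (norm w)\<^sup>2 / (1 - 2 * l * sg\<^sup>2)))"
    (is "_ = ennreal ?K")
proof -
  interpret C: sigma_finite_measure "count_space {-1, 1::real}"
    by (rule sigma_finite_measure_count_space_finite) simp
  have Kpos: "?K \<ge> 0" using a by simp
  have each: "(\<integral>\<^sup>+x. ennreal (1/2 * gauss_vec_density (y *\<^sub>R theta) sg x) *
        ennreal (exp (l * (norm (w + s *\<^sub>R (x - y *\<^sub>R theta)))\<^sup>2)) \<partial>lborel) = ennreal (1/2 * ?K)" for y
  proof -
    have "(\<integral>\<^sup>+x. ennreal (1/2 * gauss_vec_density (y *\<^sub>R theta) sg x) *
        ennreal (exp (l * (norm (w + s *\<^sub>R (x - y *\<^sub>R theta)))\<^sup>2)) \<partial>lborel)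
      = (\<integral>\<^sup>+z. ennreal (1/2 * gauss_vec_density (y *\<^sub>R theta) sg (y *\<^sub>R theta + z)) *
        ennreal (exp (l * (norm (w + s *\<^sub>R ((y *\<^sub>R theta + z) - y *\<^sub>R theta)))\<^sup>2)) \<partial>lborel)"
      by (rule nn_integral_lborel_translate) (unfold gauss_vec_density_def normal_density_def, measurable)
    also have "\<dots> = (\<integral>\<^sup>+z. ennreal (1/2) * ennreal (gauss_vec_density 0 sg z * exp (l * (norm (w + s *\<^sub>R z))\<^sup>2)) \<partial>lborel)"
      unfolding gvd_shift
    proof (intro nn_integral_cong)
      fix z :: "real^'d"
      have g: "gauss_vec_density 0 sg z \<ge> 0" by (rule gvd_nonneg)
      show "ennreal (1/2 * gauss_vec_density 0 sg z) * ennreal (exp (l * (norm (w + s *\<^sub>R (y *\<^sub>R theta + z - y *\<^sub>R theta)))\<^sup>2))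
          = ennreal (1/2) * ennreal (gauss_vec_density 0 sg z * exp (l * (norm (w + s *\<^sub>R z))\<^sup>2))"
      proof -
        have e1: "ennreal (1/2 * gauss_vec_density 0 sg z) = ennreal (1/2) * ennreal (gauss_vec_density 0 sg z)"
          by (rule ennreal_mult) (simp_all add: g)
        have e2: "ennreal (gauss_vec_density 0 sg z * exp (l * (norm (w + s *\<^sub>R z))\<^sup>2))
            = ennreal (gauss_vec_density 0 sg z) * ennreal (exp (l * (norm (w + s *\<^sub>R z))\<^sup>2))"
          by (rule ennreal_mult) (simp_all add: g)
        show ?thesis unfolding add_diff_cancel_left' e1 e2 by (simp only: mult.assoc)
      qed
    qed
    also have "\<dots> = ennreal (1/2) * ennreal ?K"
    proof -
      have m: "(\<lambda>z. ennreal (gauss_vec_density 0 sg z * exp (l * (norm (w + s *\<^sub>R z))\<^sup>2))) \<in> borel_measurable lborel"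
        by measurable
      show ?thesis by (subst nn_integral_cmult[OF m]) (simp add: gaussd[OF sg s a])
    qed
    also have "\<dots> = ennreal (1/2 * ?K)"
      by (rule ennreal_mult[symmetric]) (simp_all add: Kpos)
    finally show ?thesis .
  qed
  have "(\<integral>\<^sup>+p. ennreal (exp (l * (norm (w + s *\<^sub>R (fst p - snd p *\<^sub>R theta)))\<^sup>2)) \<partial>gauss_model theta sg)
      = (\<integral>\<^sup>+p. (\<lambda>(x, y). ennreal (1/2 * gauss_vec_density (y *\<^sub>R theta) sg x)) p *
            ennreal (exp (l * (norm (w + s *\<^sub>R (fst p - snd p *\<^sub>R theta)))\<^sup>2)) \<partial>(lborel \<Otimes>\<^sub>M count_space {-1, 1}))"
  proof -
    have m1: "(\<lambda>(x, y). ennreal (1/2 * gauss_vec_density (y *\<^sub>R theta) sg (x::real^'d))) \<in> borel_measurable (lborel \<Otimes>\<^sub>M count_space {-1, 1::real})"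
      by measurable
    have m2: "(\<lambda>p. ennreal (exp (l * (norm (w + s *\<^sub>R (fst p - snd p *\<^sub>R theta)))\<^sup>2))) \<in> borel_measurable (lborel \<Otimes>\<^sub>M count_space {-1, 1::real})"
      by measurable
    show ?thesis unfolding gauss_model_def by (rule nn_integral_density[OF m1 m2])
  qed
  also have "\<dots> = (\<integral>\<^sup>+x. \<integral>\<^sup>+y. ennreal (1/2 * gauss_vec_density (y *\<^sub>R theta) sg x) *
        ennreal (exp (l * (norm (w + s *\<^sub>R (x - y *\<^sub>R theta)))\<^sup>2)) \<partial>count_space {-1, 1} \<partial>lborel)"
    by (subst C.nn_integral_fst[symmetric]) (auto simp: case_prod_beta)
  also have "\<dots> = (\<integral>\<^sup>+x. (\<Sum>y\<in>{-1, 1::real}. ennreal (1/2 * gauss_vec_density (y *\<^sub>R theta) sg x) *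
        ennreal (exp (l * (norm (w + s *\<^sub>R (x - y *\<^sub>R theta)))\<^sup>2))) \<partial>lborel)"
    by (simp add: nn_integral_count_space_finite)
  also have "\<dots> = (\<Sum>y\<in>{-1, 1::real}. \<integral>\<^sup>+x. ennreal (1/2 * gauss_vec_density (y *\<^sub>R theta) sg x) *
        ennreal (exp (l * (norm (w + s *\<^sub>R (x - y *\<^sub>R theta)))\<^sup>2)) \<partial>lborel)"
    by (rule nn_integral_sum) (unfold gauss_vec_density_def normal_density_def, measurable)
  also have "\<dots> = (\<Sum>y\<in>{-1, 1::real}. ennreal (1/2 * ?K))"
    unfolding each ..
  also have "\<dots> = ennreal (\<Sum>y\<in>{-1, 1::real}. 1/2 * ?K)"
    by (rule sum_ennreal) (simp add: Kpos)
  also have "\<dots> = ennreal ?K"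
    by simp
  finally show ?thesis .
qed


lemma sets_G[measurable_cong]:
  "sets (gauss_model theta sg) = sets (lborel \<Otimes>\<^sub>M count_space {-1, 1::real})"
  by (simp add: gauss_model_def)

lemma space_G: "space (gauss_model theta sg) = UNIV \<times> {-1, 1::real}"
  by (simp add: gauss_model_def space_pair_measure)

lemma prob_G:
  fixes theta :: "real^'d"
  assumes sg: "sg > 0"
  shows "prob_space (gauss_model theta sg)"
proof
  have "emeasure (gauss_model theta sg) (space (gauss_model theta sg))
     = (\<integral>\<^sup>+p. ennreal (exp (0 * (norm (0 + 1 *\<^sub>R (fst p - snd p *\<^sub>R theta)))\<^sup>2)) \<partial>gauss_model theta sg)"
    by (simp add: nn_integral_const)
  also have "\<dots> = 1"
    by (subst one_sample[OF sg]) simp_all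
  finally show "emeasure (gauss_model theta sg) (space (gauss_model theta sg)) = 1" .
qed

lemma multi:
  fixes theta :: "real^'d" and sg :: real and s :: "nat \<Rightarrow> real" and I :: "nat set"
  assumes sg: "sg > 0" and fin: "finite I"
  shows "(\<forall>i\<in>I. s i * s i = 1) \<longrightarrow> (\<forall>l w. 0 \<le> l \<longrightarrow> 2 * l * sg\<^sup>2 * real (card I) < 1 \<longrightarrow>
    (\<integral>\<^sup>+S. ennreal (exp (l * (norm (w + (\<Sum>i\<in>I. s i *\<^sub>R (fst (S i) - snd (S i) *\<^sub>R theta))))\<^sup>2))
      \<partial>PiM I (\<lambda>_. gauss_model theta sg))
    = ennreal ((1 / sqrt (1 - 2 * l * sg\<^sup>2 * real (card I))) ^ CARD('d)
        * exp (l * (norm w)\<^sup>2 / (1 - 2 * l * sg\<^sup>2 * real (card I)))))"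
  using fin
proof (induction I rule: finite_induct)
  case empty
  show ?case by (simp add: PiM_empty)
next
  case (insert i I)
  interpret G: prob_space "gauss_model theta sg" by (rule prob_G[OF sg])
  interpret P: product_sigma_finite "\<lambda>_::nat. gauss_model theta sg"
    by (simp add: product_sigma_finite_def G.sigma_finite_measure_axioms)
  show ?case
  proof (intro impI allI)
    fix l :: real and w :: "real^'d"
    assume s: "\<forall>j\<in>insert i I. s j * s j = 1" and l: "0 \<le> l"
      and lt: "2 * l * sg\<^sup>2 * real (card (insert i I)) < 1"
    define n where "n = real (card I)"
    have cn: "real (card (insert i I)) = n + 1" using insert by (simp add: n_def)
    have n0: "n \<ge> 0" by (simp add: n_def)
    define a where "a = 1 - 2 * l * sg\<^sup>2"
    have lt1: "2 * l * sg\<^sup>2 < 1" using lt cn l n0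
      by (smt (verit, best) mult_nonneg_nonneg zero_le_power2 mult_le_cancel_left1)
    have apos: "a > 0" using lt1 by (simp add: a_def)
    define l' where "l' = l / a"
    have l'0: "l' \<ge> 0" using l apos by (simp add: l'_def)
    have ab: "a * (1 - 2 * l' * sg\<^sup>2 * n) = 1 - 2 * l * sg\<^sup>2 * (n + 1)"
      using apos by (simp add: l'_def a_def field_simps)
    have lt': "2 * l' * sg\<^sup>2 * n < 1"
    proof -
      have "a * (1 - 2 * l' * sg\<^sup>2 * n) > 0" using ab lt cn by simp
      then show ?thesis using apos by (simp add: zero_less_mult_iff)
    qed
    define b where "b = 1 - 2 * l' * sg\<^sup>2 * n"
    have bpos: "b > 0" using lt' by (simp add: b_def)
    define V where "V = (\<lambda>S. \<Sum>j\<in>I. s j *\<^sub>R (fst (S j) - snd (S j) *\<^sub>R theta))"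
    have IH: "(\<integral>\<^sup>+S. ennreal (exp (l' * (norm (w + V S))\<^sup>2)) \<partial>PiM I (\<lambda>_. gauss_model theta sg))
      = ennreal ((1 / sqrt b) ^ CARD('d) * exp (l' * (norm w)\<^sup>2 / b))"
      using insert.IH s l'0 lt' unfolding V_def b_def n_def by auto
    have meas: "(\<lambda>S. ennreal (exp (l * (norm (w + (\<Sum>j\<in>insert i I. s j *\<^sub>R (fst (S j) - snd (S j) *\<^sub>R theta))))\<^sup>2)))
       \<in> borel_measurable (PiM (insert i I) (\<lambda>_. gauss_model theta sg))"
      by measurable
    have "(\<integral>\<^sup>+S. ennreal (exp (l * (norm (w + (\<Sum>j\<in>insert i I. s j *\<^sub>R (fst (S j) - snd (S j) *\<^sub>R theta))))\<^sup>2))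
      \<partial>PiM (insert i I) (\<lambda>_. gauss_model theta sg))
      = (\<integral>\<^sup>+S. \<integral>\<^sup>+p. ennreal (exp (l * (norm (w + (\<Sum>j\<in>insert i I. s j *\<^sub>R (fst ((S(i := p)) j) - snd ((S(i := p)) j) *\<^sub>R theta))))\<^sup>2))
         \<partial>gauss_model theta sg \<partial>PiM I (\<lambda>_. gauss_model theta sg))"
      by (rule P.product_nn_integral_insert[OF insert(1,2) meas])
    also have "\<dots> = (\<integral>\<^sup>+S. \<integral>\<^sup>+p. ennreal (exp (l * (norm ((w + V S) + s i *\<^sub>R (fst p - snd p *\<^sub>R theta)))\<^sup>2))
         \<partial>gauss_model theta sg \<partial>PiM I (\<lambda>_. gauss_model theta sg))"
    proof (intro nn_integral_cong)
      fix S p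
      have "(\<Sum>j\<in>insert i I. s j *\<^sub>R (fst ((S(i := p)) j) - snd ((S(i := p)) j) *\<^sub>R theta))
          = s i *\<^sub>R (fst p - snd p *\<^sub>R theta) + V S" (is "?L = ?R")
        unfolding V_def using insert(1,2)
        by (subst sum.insert) (auto intro!: sum.cong)
      then show "ennreal (exp (l * (norm (w + (\<Sum>j\<in>insert i I. s j *\<^sub>R (fst ((S(i := p)) j) - snd ((S(i := p)) j) *\<^sub>R theta))))\<^sup>2))
        = ennreal (exp (l * (norm ((w + V S) + s i *\<^sub>R (fst p - snd p *\<^sub>R theta)))\<^sup>2))"
        unfolding \<open>?L = ?R\<close> by (simp only: add_ac)
    qed
    also have "\<dots> = (\<integral>\<^sup>+S. ennreal ((1 / sqrt a) ^ CARD('d)) * ennreal (exp (l' * (norm (w + V S))\<^sup>2))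
         \<partial>PiM I (\<lambda>_. gauss_model theta sg))"
    proof (intro nn_integral_cong)
      fix S
      have si: "s i * s i = 1" using s by simp
      show "(\<integral>\<^sup>+p. ennreal (exp (l * (norm ((w + V S) + s i *\<^sub>R (fst p - snd p *\<^sub>R theta)))\<^sup>2)) \<partial>gauss_model theta sg)
        = ennreal ((1 / sqrt a) ^ CARD('d)) * ennreal (exp (l' * (norm (w + V S))\<^sup>2))"
        unfolding one_sample[OF sg si lt1] a_def[symmetric] l'_def
        by (subst ennreal_mult[symmetric]) (use apos in \<open>auto simp: mult_divide_mult_cancel_left\<close>)
    qed
    also have "\<dots> = ennreal ((1 / sqrt a) ^ CARD('d)) * ennreal ((1 / sqrt b) ^ CARD('d) * exp (l' * (norm w)\<^sup>2 / b))"
    proof -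
      have m: "(\<lambda>S. ennreal (exp (l' * (norm (w + V S))\<^sup>2))) \<in> borel_measurable (PiM I (\<lambda>_. gauss_model theta sg))"
        unfolding V_def by measurable
      show ?thesis by (subst nn_integral_cmult[OF m]) (simp add: IH)
    qed
    also have "\<dots> = ennreal ((1 / sqrt (1 - 2 * l * sg\<^sup>2 * real (card (insert i I)))) ^ CARD('d)
        * exp (l * (norm w)\<^sup>2 / (1 - 2 * l * sg\<^sup>2 * real (card (insert i I)))))"
    proof -
      have ab': "a * b = 1 - 2 * l * sg\<^sup>2 * real (card (insert i I))" using ab cn by (simp add: b_def)
      have e1: "(1 / sqrt a) ^ CARD('d) * (1 / sqrt b) ^ CARD('d) = (1 / sqrt (a * b)) ^ CARD('d)"
        by (simp add: real_sqrt_mult power_mult_distrib[symmetric])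
      have e2: "l' * (norm w)\<^sup>2 / b = l * (norm w)\<^sup>2 / (a * b)"
        using apos bpos by (simp add: l'_def)
      have r: "(1 / sqrt a) ^ CARD('d) * ((1 / sqrt b) ^ CARD('d) * exp (l' * (norm w)\<^sup>2 / b))
         = (1 / sqrt (1 - 2 * l * sg\<^sup>2 * real (card (insert i I)))) ^ CARD('d)
        * exp (l * (norm w)\<^sup>2 / (1 - 2 * l * sg\<^sup>2 * real (card (insert i I))))"
        unfolding ab'[symmetric] e2 e1[symmetric] by (simp only: mult.assoc)
      have n1: "0 \<le> (1 / sqrt a) ^ CARD('d)" using apos by simp
      have n2: "0 \<le> (1 / sqrt b) ^ CARD('d) * exp (l' * (norm w)\<^sup>2 / b)" using bpos by simp
      show ?thesis unfolding ennreal_mult[symmetric, OF n1 n2] r ..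
    qed
    finally show "(\<integral>\<^sup>+S. ennreal (exp (l * (norm (w + (\<Sum>j\<in>insert i I. s j *\<^sub>R (fst (S j) - snd (S j) *\<^sub>R theta))))\<^sup>2))
      \<partial>PiM (insert i I) (\<lambda>_. gauss_model theta sg))
    = ennreal ((1 / sqrt (1 - 2 * l * sg\<^sup>2 * real (card (insert i I)))) ^ CARD('d)
        * exp (l * (norm w)\<^sup>2 / (1 - 2 * l * sg\<^sup>2 * real (card (insert i I)))))" .
  qed
qed



lemma arith_final:
  fixes nt sg D mm :: real and m :: nat
  assumes nt: "nt > 0" and sg: "sg > 0" and D: "D \<ge> 0" and mm: "mm = real m" and m1: "m \<ge> 1"
    and that: "real k = D"
  defines "c \<equiv> sqrt 20 * sg / nt * sqrt (sqrt D / mm + ln 2)"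
  defines "r \<equiv> mm * (c * nt + 2 * sg * sqrt (D / mm))"
  shows "2 ^ m * (exp (- (1 / (4 * mm * sg\<^sup>2)) * r\<^sup>2) * sqrt 2 ^ k) \<le> exp (- 6 * sqrt D / 5)"
    and "r \<ge> 0"
proof -
  have mpos: "mm > 0" using mm m1 by simp
  define p where "p = c * nt"
  define q where "q = 2 * sg * sqrt (D / mm)"
  have p0: "p \<ge> 0" unfolding p_def c_def using nt sg mpos D by simp
  have q0: "q \<ge> 0" unfolding q_def using sg mpos D by simp
  show "r \<ge> 0" unfolding r_def using p0 q0 mpos p_def q_def by simp
  have p2: "p\<^sup>2 = 20 * sg\<^sup>2 * (sqrt D / mm + ln 2)"
    unfolding p_def c_def using nt mpos D
    by (simp add: power_mult_distrib power_divide)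
  have q2: "q\<^sup>2 = 4 * sg\<^sup>2 * (D / mm)"
    unfolding q_def using mpos D by (simp add: power_mult_distrib)
  have r2: "r\<^sup>2 \<ge> mm\<^sup>2 * (p\<^sup>2 + q\<^sup>2)"
  proof -
    have "r\<^sup>2 = mm\<^sup>2 * (p + q)\<^sup>2" unfolding r_def p_def q_def by (simp add: power_mult_distrib)
    moreover have "(p + q)\<^sup>2 \<ge> p\<^sup>2 + q\<^sup>2" using p0 q0 by (simp add: power2_sum)
    ultimately show ?thesis by (simp add: mult_left_mono)
  qed
  have key: "mm\<^sup>2 * (p\<^sup>2 + q\<^sup>2) / (4 * mm * sg\<^sup>2) = 5 * sqrt D + 5 * mm * ln 2 + D"
    unfolding p2 q2 using mpos sg by (simp add: field_simps power2_eq_square)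
  have lr: "(1 / (4 * mm * sg\<^sup>2)) * r\<^sup>2 \<ge> 5 * sqrt D + 5 * mm * ln 2 + D"
  proof -
    have "(1 / (4 * mm * sg\<^sup>2)) * r\<^sup>2 \<ge> (1 / (4 * mm * sg\<^sup>2)) * (mm\<^sup>2 * (p\<^sup>2 + q\<^sup>2))"
      using r2 mpos sg by (intro mult_left_mono) auto
    then show ?thesis using key by simp
  qed
  have e2: "(2::real) ^ m = exp (mm * ln 2)" using mm by (simp add: exp_of_nat_mult)
  have e3: "sqrt 2 ^ k = exp (D * (ln 2 / 2))"
  proof -
    have "exp (ln 2 / 2) = exp (ln (sqrt (2::real)))" by (simp add: ln_sqrt)
    then have "sqrt 2 = exp (ln 2 / 2)" by simp
    then have "sqrt 2 ^ k = exp (real k * (ln 2 / 2))" by (simp only: exp_of_nat_mult)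
    then show ?thesis using that by simp
  qed
  have ln2: "ln 2 < (1::real)" using ln_2_less_1 .
  have ln20: "ln 2 > (0::real)" by simp
  have "2 ^ m * (exp (- (1 / (4 * mm * sg\<^sup>2)) * r\<^sup>2) * sqrt 2 ^ k)
      = exp (mm * ln 2 - (1 / (4 * mm * sg\<^sup>2)) * r\<^sup>2 + D * (ln 2 / 2))"
  proof -
    have h: "\<And>a b c::real. exp a * (exp (- b) * exp c) = exp (a - b + c)"
      by (simp add: exp_add exp_diff exp_minus field_simps)
    show ?thesis unfolding e2 e3 mult_minus_left h ..
  qed
  also have "\<dots> \<le> exp (- 6 * sqrt D / 5)"
  proof (rule exp_le_cancel_iff[THEN iffD2])
    have "mm * ln 2 \<ge> 0" using mpos ln20 by simp
    moreover have "D * (ln 2 / 2) \<le> D" using D ln2 by (intro mult_left_le) auto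
    moreover have "sqrt D \<ge> 0" using D by simp
    ultimately show "mm * ln 2 - (1 / (4 * mm * sg\<^sup>2)) * r\<^sup>2 + D * (ln 2 / 2) \<le> - 6 * sqrt D / 5"
      using lr by linarith
  qed
  finally show "2 ^ m * (exp (- (1 / (4 * mm * sg\<^sup>2)) * r\<^sup>2) * sqrt 2 ^ k) \<le> exp (- 6 * sqrt D / 5)" .
qed



theorem lemma3:
  fixes theta :: "real^'d" and sg :: real and m :: nat and h :: "real^'d \<Rightarrow> real"
  assumes "m \<ge> 1" and "theta \<noteq> 0" and "sg > 0"
    and "h \<in> borel_measurable borel" and "\<And>x. h x \<in> {-1, 1}"
  defines "c \<equiv> sqrt 20 * sg / norm theta * sqrt (sqrt (real CARD('d)) / real m + ln 2)"
  shows "measure (gauss_samples m theta sg)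
           {S \<in> space (gauss_samples m theta sg).
              norm ((1 / real m) *\<^sub>R (\<Sum>i<m. h (fst (S i)) *\<^sub>R fst (S i)))
                \<ge> (1 + c) * norm theta + 2 * sg * sqrt (real CARD('d) / real m)}
         \<le> exp (- 6 * sqrt (real CARD('d)) / 5)"
proof -
  note m1 = assms(1) and th = assms(2) and sg = assms(3) and hm = assms(4) and hv = assms(5)
  define M where "M = gauss_samples m theta sg"
  define G where "G = gauss_model theta sg"
  have M_def': "M = PiM {..<m} (\<lambda>_. G)" unfolding M_def G_def gauss_samples_def ..
  define D where "D = real CARD('d)"
  define mm where "mm = real m"
  have mpos: "mm > 0" using m1 by (simp add: mm_def)
  have nt: "norm theta > 0" using th by simp
  define r where "r = mm * (c * norm theta + 2 * sg * sqrt (D / mm))"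
  define l where "l = 1 / (4 * mm * sg\<^sup>2)"
  have l0: "l \<ge> 0" using mpos by (simp add: l_def)
  have AR: "2 ^ m * (exp (- l * r\<^sup>2) * sqrt 2 ^ CARD('d)) \<le> exp (- 6 * sqrt D / 5)" and r0: "r \<ge> 0"
    using arith_final[OF nt sg _ mm_def m1, of "CARD('d)"] unfolding r_def l_def c_def D_def mm_def
    by auto
  define Pat where "Pat = PiE {..<m} (\<lambda>_. {-1, 1::real})"
  define V where "V = (\<lambda>s S. \<Sum>i<m. s i *\<^sub>R (fst (S i) - snd (S i) *\<^sub>R theta))"
  define B where "B = (\<lambda>s. {S \<in> space M. r\<^sup>2 \<le> (norm (V s S))\<^sup>2})"
  define A where "A = {S \<in> space M.
              norm ((1 / real m) *\<^sub>R (\<Sum>i<m. h (fst (S i)) *\<^sub>R fst (S i)))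
                \<ge> (1 + c) * norm theta + 2 * sg * sqrt (real CARD('d) / real m)}"
  have finPat: "finite Pat" unfolding Pat_def by (simp add: finite_PiE)
  have cardPat: "card Pat = 2 ^ m" unfolding Pat_def by (simp add: card_PiE) (simp add: numeral_2_eq_2)
  have Bsets: "B s \<in> sets M" for s
    unfolding B_def V_def M_def' G_def by measurable
  have cover: "A \<subseteq> (\<Union>s\<in>Pat. B s)"
  proof
    fix S assume SA: "S \<in> A"
    then have SM: "S \<in> space M" unfolding A_def by simp
    have Sy: "snd (S i) \<in> {-1, 1}" if "i < m" for i
    proof -
      have "S i \<in> space G" using SM that unfolding M_def' by (simp add: space_PiM PiE_iff)
      then have "S i \<in> UNIV \<times> {-1, 1}" by (simp add: G_def space_G)
      then show ?thesis by (simp add: mem_Times_iff)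
    qed
    define s where "s = restrict (\<lambda>i. h (fst (S i))) {..<m}"
    have sP: "s \<in> Pat" unfolding s_def Pat_def using hv by auto
    have decomp: "(\<Sum>i<m. h (fst (S i)) *\<^sub>R fst (S i)) = V s S + (\<Sum>i<m. h (fst (S i)) * snd (S i)) *\<^sub>R theta"
    proof -
      have "(\<Sum>i<m. h (fst (S i)) *\<^sub>R fst (S i)) = (\<Sum>i<m. s i *\<^sub>R (fst (S i) - snd (S i) *\<^sub>R theta) + (h (fst (S i)) * snd (S i)) *\<^sub>R theta)"
        by (rule sum.cong) (auto simp: s_def algebra_simps)
      also have "\<dots> = V s S + (\<Sum>i<m. h (fst (S i)) * snd (S i)) *\<^sub>R theta"
        unfolding V_def by (simp add: sum.distrib scaleR_sum_left)
      finally show ?thesis .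
    qed
    have hy: "\<bar>\<Sum>i<m. h (fst (S i)) * snd (S i)\<bar> \<le> mm"
    proof -
      have "\<bar>\<Sum>i<m. h (fst (S i)) * snd (S i)\<bar> \<le> (\<Sum>i<m. \<bar>h (fst (S i)) * snd (S i)\<bar>)"
        by (rule sum_abs)
      also have "\<dots> = (\<Sum>i<m. 1)"
      proof (rule sum.cong)
        fix i assume "i \<in> {..<m}"
        then show "\<bar>h (fst (S i)) * snd (S i)\<bar> = 1" using Sy[of i] hv[of "fst (S i)"] by (auto simp: abs_mult)
      qed simp
      finally show ?thesis by (simp add: mm_def)
    qed
    have "norm (\<Sum>i<m. h (fst (S i)) *\<^sub>R fst (S i)) \<le> norm (V s S) + mm * norm theta"
    proof -
      have "norm (\<Sum>i<m. h (fst (S i)) *\<^sub>R fst (S i)) \<le> norm (V s S) + norm ((\<Sum>i<m. h (fst (S i)) * snd (S i)) *\<^sub>R theta)"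
        unfolding decomp by (rule norm_triangle_ineq)
      also have "norm ((\<Sum>i<m. h (fst (S i)) * snd (S i)) *\<^sub>R theta) \<le> mm * norm theta"
        using hy by (simp add: mult_right_mono)
      finally show ?thesis by simp
    qed
    moreover have "norm (\<Sum>i<m. h (fst (S i)) *\<^sub>R fst (S i)) \<ge> mm * norm theta + r"
    proof -
      have "(1 + c) * norm theta + 2 * sg * sqrt (D / mm) \<le> (1 / mm) * norm (\<Sum>i<m. h (fst (S i)) *\<^sub>R fst (S i))"
        using SA mpos unfolding A_def D_def mm_def by simp
      then have "mm * ((1 + c) * norm theta + 2 * sg * sqrt (D / mm)) \<le> mm * ((1 / mm) * norm (\<Sum>i<m. h (fst (S i)) *\<^sub>R fst (S i)))"
        by (rule mult_left_mono) (use mpos in simp)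
      also have "\<dots> = norm (\<Sum>i<m. h (fst (S i)) *\<^sub>R fst (S i))" using mpos by simp
      finally have X: "mm * ((1 + c) * norm theta + 2 * sg * sqrt (D / mm)) \<le> norm (\<Sum>i<m. h (fst (S i)) *\<^sub>R fst (S i))" .
      have "mm * ((1 + c) * norm theta + 2 * sg * sqrt (D / mm)) = mm * norm theta + r"
        unfolding r_def by algebra
      then show ?thesis using X by simp
    qed
    ultimately have "r \<le> norm (V s S)" by simp
    then have "r\<^sup>2 \<le> (norm (V s S))\<^sup>2" using r0 by (simp add: power_mono)
    then have "S \<in> B s" unfolding B_def using SM by simp
    then show "S \<in> (\<Union>s\<in>Pat. B s)" using sP by blast
  qed
  define Q where "Q = exp (- l * r\<^sup>2) * sqrt 2 ^ CARD('d)"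
  have Q0: "Q \<ge> 0" unfolding Q_def by simp
  have Bbound: "emeasure M (B s) \<le> ennreal Q" if sP: "s \<in> Pat" for s
  proof -
    have ss: "\<forall>i\<in>{..<m}. s i * s i = 1"
    proof
      fix i assume "i \<in> {..<m}"
      then have "s i \<in> {-1, 1}" using sP unfolding Pat_def by (simp add: PiE_iff)
      then show "s i * s i = 1" by (elim insertE) simp_all
    qed
    have cm: "real (card {..<m}) = mm" by (simp add: mm_def)
    have half: "1 - 2 * l * sg\<^sup>2 * real (card {..<m}) = 1 / 2"
      unfolding cm l_def using mpos sg by (simp add: field_simps)
    have lt: "2 * l * sg\<^sup>2 * real (card {..<m}) < 1" using half by simp
    have H: "\<forall>l w. 0 \<le> l \<longrightarrow> 2 * l * sg\<^sup>2 * real (card {..<m}) < 1 \<longrightarrow>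
    (\<integral>\<^sup>+S. ennreal (exp (l * (norm (w + (\<Sum>i\<in>{..<m}. s i *\<^sub>R (fst (S i) - snd (S i) *\<^sub>R theta))))\<^sup>2))
      \<partial>PiM {..<m} (\<lambda>_. gauss_model theta sg))
    = ennreal ((1 / sqrt (1 - 2 * l * sg\<^sup>2 * real (card {..<m}))) ^ CARD('d)
        * exp (l * (norm w)\<^sup>2 / (1 - 2 * l * sg\<^sup>2 * real (card {..<m}))))"
      using multi[OF sg finite_lessThan, where s=s and theta=theta] ss by blast
    have I: "(\<integral>\<^sup>+S. ennreal (exp (l * (norm (0 + V s S))\<^sup>2)) \<partial>M) = ennreal (sqrt 2 ^ CARD('d))"
    proof -
      have "(\<integral>\<^sup>+S. ennreal (exp (l * (norm (0 + V s S))\<^sup>2)) \<partial>M)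
          = ennreal ((1 / sqrt (1 - 2 * l * sg\<^sup>2 * real (card {..<m}))) ^ CARD('d)
        * exp (l * (norm (0::real^'d))\<^sup>2 / (1 - 2 * l * sg\<^sup>2 * real (card {..<m}))))"
        using H l0 lt unfolding M_def' G_def V_def by blast
      also have "\<dots> = ennreal (sqrt 2 ^ CARD('d))"
        unfolding half by (simp add: real_sqrt_divide)
      finally show ?thesis .
    qed
    have "emeasure M (B s) = (\<integral>\<^sup>+S. indicator (B s) S \<partial>M)"
      by (rule nn_integral_indicator[symmetric, OF Bsets])
    also have "\<dots> \<le> (\<integral>\<^sup>+S. ennreal (exp (- l * r\<^sup>2)) * ennreal (exp (l * (norm (0 + V s S))\<^sup>2)) \<partial>M)"
    proof (rule nn_integral_mono)
      fix S assume "S \<in> space M"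
      show "indicator (B s) S \<le> ennreal (exp (- l * r\<^sup>2)) * ennreal (exp (l * (norm (0 + V s S))\<^sup>2))"
      proof (cases "S \<in> B s")
        case True
        then have "r\<^sup>2 \<le> (norm (V s S))\<^sup>2" unfolding B_def by simp
        then have "0 \<le> - l * r\<^sup>2 + l * (norm (0 + V s S))\<^sup>2" using l0
          by (simp add: mult_left_mono algebra_simps)
        then have "1 \<le> exp (- l * r\<^sup>2) * exp (l * (norm (0 + V s S))\<^sup>2)"
          by (simp add: exp_add[symmetric])
        then have "ennreal 1 \<le> ennreal (exp (- l * r\<^sup>2) * exp (l * (norm (0 + V s S))\<^sup>2))"
          by (rule ennreal_leI)
        then show ?thesis using True by (simp add: ennreal_mult[symmetric])
      qed simp
    qed
    also have "\<dots> = ennreal (exp (- l * r\<^sup>2)) * ennreal (sqrt 2 ^ CARD('d))"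
    proof -
      have m: "(\<lambda>S. ennreal (exp (l * (norm (0 + V s S))\<^sup>2))) \<in> borel_measurable M"
        unfolding V_def M_def' G_def by measurable
      show ?thesis by (subst nn_integral_cmult[OF m]) (simp only: I)
    qed
    also have "\<dots> = ennreal Q" unfolding Q_def by (rule ennreal_mult[symmetric]) auto
    finally show ?thesis .
  qed
  have "emeasure M A \<le> emeasure M (\<Union>s\<in>Pat. B s)"
    by (rule emeasure_mono[OF cover]) (use finPat Bsets in auto)
  also have "\<dots> \<le> (\<Sum>s\<in>Pat. emeasure M (B s))"
    by (rule emeasure_subadditive_finite) (use finPat Bsets in auto)
  also have "\<dots> \<le> (\<Sum>s\<in>Pat. ennreal Q)"
    by (rule sum_mono) (rule Bbound)
  also have "\<dots> = ennreal (2 ^ m * Q)"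
    using Q0 cardPat by (simp add: ennreal_mult ennreal_power[symmetric])
  finally have E: "emeasure M A \<le> ennreal (2 ^ m * Q)" .
  have "measure M A \<le> 2 ^ m * Q"
  proof -
    have "measure M A = enn2real (emeasure M A)" by (simp add: measure_def)
    also have "\<dots> \<le> enn2real (ennreal (2 ^ m * Q))"
      by (rule enn2real_mono[OF E]) simp
    also have "\<dots> = 2 ^ m * Q" using Q0 by simp
    finally show ?thesis .
  qed
  also have "\<dots> \<le> exp (- 6 * sqrt D / 5)" using AR unfolding Q_def .
  finally show ?thesis unfolding M_def A_def D_def .
qed


end
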